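(* Fix a number $x$ (real or complex) and let $(u_n)_{n\ge0}$ satisfy $(n+\tfrac12)u_{n+1}=2xn\,u_n-(n-\tfrac12)u_{n-1}$ for all $n\ge1$. Define $\hat u_n=2x\,u_n-u_{n+1}-u_{n-1}$ for $n\ge1$. Then $(n+\tfrac32)\hat u_{n+1}=2xn\,\hat u_n-(n-\tfrac32)\hat u_{n-1}$ for all $n\ge2$. *)

theory Defs
  imports Complex_Main
begin

definition uhat :: "complex \<Rightarrow> (nat \<Rightarrow> complex) \<Rightarrow> nat \<Rightarrow> complex" where
  "uhat x u n = 2 * x * u n - u (n + 1) - u (n - 1)"

end

theory Submission
  imports Defs
begin

theorem theorem2:
  fixes x :: complex and u :: "nat \<Rightarrow> complex"
  assumes rec: "\<And>n. n \<ge> 1 \<Longrightarrow>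
     (of_nat n + 1/2) * u (n + 1) = 2 * x * of_nat n * u n - (of_nat n - 1/2) * u (n - 1)"
  shows "\<And>n. n \<ge> 2 \<Longrightarrow>
     (of_nat n + 3/2) * uhat x u (n + 1) = 2 * x * of_nat n * uhat x u n - (of_nat n - 3/2) * uhat x u (n - 1)"
proof -
  fix n :: nat assume "n \<ge> 2"
  then obtain m where n: "n = m + 2" by (metis add.commute le_add_diff_inverse)
  define N :: complex where "N = of_nat n"
  have a: "(N + 1 + 1/2) * u (m+4) - 2 * x * (N+1) * u (m+3) + (N + 1 - 1/2) * u (m+2) = 0"
    using rec[of "m+3"] unfolding N_def n by (simp add: algebra_simps numeral_eq_Suc)
  have b: "(N + 1/2) * u (m+3) - 2 * x * N * u (m+2) + (N - 1/2) * u (m+1) = 0"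
    using rec[of "m+2"] unfolding N_def n by (simp add: algebra_simps numeral_eq_Suc)
  have c: "(N - 1 + 1/2) * u (m+2) - 2 * x * (N-1) * u (m+1) + (N - 1 - 1/2) * u m = 0"
    using rec[of "m+1"] unfolding N_def n by (simp add: algebra_simps numeral_eq_Suc)
  have "(N + 3/2) * uhat x u (n + 1) - (2 * x * N * uhat x u n - (N - 3/2) * uhat x u (n - 1))
     = - ((N + 1 + 1/2) * u (m+4) - 2 * x * (N+1) * u (m+3) + (N + 1 - 1/2) * u (m+2))
       + 2 * x * ((N + 1/2) * u (m+3) - 2 * x * N * u (m+2) + (N - 1/2) * u (m+1))
       - ((N - 1 + 1/2) * u (m+2) - 2 * x * (N-1) * u (m+1) + (N - 1 - 1/2) * u m)"
    unfolding uhat_def n by (simp add: algebra_simps numeral_eq_Suc)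
  also have "\<dots> = 0" using a b c by simp
  finally show "(of_nat n + 3/2) * uhat x u (n + 1) = 2 * x * of_nat n * uhat x u n - (of_nat n - 3/2) * uhat x u (n - 1)"
    unfolding N_def by simp
qed

end
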